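(* Let $c>0$, $n\ge 2$, and let $\mathbb{R}^n_c=\{\mathbf{v}\in\mathbb{R}^n:\|\mathbf{v}\|<c\}$ be equipped with Möbius addition $\oplus$, Möbius scalar multiplication $\otimes$ and Möbius coaddition $\boxplus$ (defined in the context). Let $A,B\in\mathbb{R}^n_c$ be distinct and, for $t\in\mathbb{R}$, define $$P_{AB}(t)=\tfrac12\otimes A\;\boxplus\;\Big\{\tfrac12\otimes A\oplus\Big[\big(\ominus\tfrac12\otimes A\oplus(B\ominus\tfrac12\otimes A)\big)\otimes t\Big]\Big\}.$$ Then $\{P_{AB}(t):t\in\mathbb{R}\}$ is the unique Euclidean straight line through $A$ and $B$ (intersected with the ball $\mathbb{R}^n_c$), i.e. it equals the set of points of $\mathbb{R}^n_c$ lying on the Euclidean line through $A$ and $B$.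
   Context: Möbius addition in the ball $\mathbb{R}^n_c$ is $$\mathbf{u}\oplus\mathbf{v}=\frac{\big(1+\frac{2}{c^2}\mathbf{u}\cdot\mathbf{v}+\frac{1}{c^2}\|\mathbf{v}\|^2\big)\mathbf{u}+\big(1-\frac{1}{c^2}\|\mathbf{u}\|^2\big)\mathbf{v}}{1+\frac{2}{c^2}\mathbf{u}\cdot\mathbf{v}+\frac{1}{c^4}\|\mathbf{u}\|^2\|\mathbf{v}\|^2},$$ with $\ominus\mathbf{v}=-\mathbf{v}$ and $\mathbf{u}\ominus\mathbf{v}=\mathbf{u}\oplus(-\mathbf{v})$. Scalar multiplication: for $r\in\mathbb{R}$ and $\mathbf{v}\neq\mathbf{0}$, $r\otimes\mathbf{v}=\mathbf{v}\otimes r=c\tanh\!\big(r\tanh^{-1}(\|\mathbf{v}\|/c)\big)\frac{\mathbf{v}}{\|\mathbf{v}\|}$, and $r\otimes\mathbf{0}=\mathbf{0}$; scalar multiplication binds more tightly than $\oplus,\ominus,\boxplus$. The gyration generated by $\mathbf{u},\mathbf{v}$ is $\mathrm{gyr}[\mathbf{u},\mathbf{v}]\mathbf{w}=\ominus(\mathbf{u}\oplus\mathbf{v})\oplus\big(\mathbf{u}\oplus(\mathbf{v}\oplus\mathbf{w})\big)$. Möbius coaddition is $\mathbf{a}\boxplus\mathbf{b}=\mathbf{a}\oplus\mathrm{gyr}[\mathbf{a},\ominus\mathbf{b}]\mathbf{b}$. *)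

theory Defs
  imports "HOL-Analysis.Analysis"
begin

definition mobius_add :: "real \<Rightarrow> 'a::real_inner \<Rightarrow> 'a \<Rightarrow> 'a" where
  "mobius_add c u v =
     (1 / (1 + (2 / c^2) * (u \<bullet> v) + (1 / c^4) * (norm u)^2 * (norm v)^2)) *\<^sub>R
     ((1 + (2 / c^2) * (u \<bullet> v) + (1 / c^2) * (norm v)^2) *\<^sub>R u
      + (1 - (1 / c^2) * (norm u)^2) *\<^sub>R v)"

definition mobius_sub :: "real \<Rightarrow> 'a::real_inner \<Rightarrow> 'a \<Rightarrow> 'a" where
  "mobius_sub c u v = mobius_add c u (- v)"

definition mobius_smult :: "real \<Rightarrow> real \<Rightarrow> 'a::real_inner \<Rightarrow> 'a" where
  "mobius_smult c r v =
     (if v = 0 then 0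
      else (c * tanh (r * artanh (norm v / c))) *\<^sub>R ((1 / norm v) *\<^sub>R v))"

definition mobius_gyr :: "real \<Rightarrow> 'a::real_inner \<Rightarrow> 'a \<Rightarrow> 'a \<Rightarrow> 'a" where
  "mobius_gyr c u v w = mobius_add c (- (mobius_add c u v)) (mobius_add c u (mobius_add c v w))"

definition mobius_coadd :: "real \<Rightarrow> 'a::real_inner \<Rightarrow> 'a \<Rightarrow> 'a" where
  "mobius_coadd c a b = mobius_add c a (mobius_gyr c a (- b) b)"

definition P_AB :: "real \<Rightarrow> 'a::real_inner \<Rightarrow> 'a \<Rightarrow> real \<Rightarrow> 'a" where
  "P_AB c A B t =
     (let h = mobius_smult c (1/2) A
      in mobius_coadd c h
           (mobius_add c h
              (mobius_smult c t (mobius_add c (- h) (mobius_sub c B h)))))"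

end

theory Submission
  imports Defs
begin


definition MS :: "real \<Rightarrow> 'a::real_inner \<Rightarrow> 'a" where
  "MS c x = (2 / (1 - (norm x)^2 / c^2)) *\<^sub>R x"
definition MT :: "real \<Rightarrow> 'a::real_inner \<Rightarrow> real" where
  "MT c x = (1 + (norm x)^2 / c^2) / (1 - (norm x)^2 / c^2)"

lemma q_lt1: assumes "c > 0" "norm (x::'a::real_inner) < c" shows "(norm x)^2 / c^2 < 1"
proof -
  have "(norm x)^2 < c^2" using assms by (simp add: power_strict_mono)
  thus ?thesis using assms by simp
qed

lemma MT_ge1: assumes "c > 0" "norm (x::'a::real_inner) < c" shows "MT c x \<ge> 1"
proof -
  have q: "(norm x)^2 / c^2 < 1" "0 \<le> (norm x)^2 / c^2" using q_lt1[OF assms] by auto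
  thus ?thesis unfolding MT_def by (simp add: field_simps)
qed

lemma MS_norm: assumes "c > 0" "norm (x::'a::real_inner) < c"
  shows "(MS c x \<bullet> MS c x) / c^2 = (MT c x)^2 - 1"
proof -
  have q: "(norm x)^2 / c^2 < 1" using q_lt1[OF assms] by auto
  have "(MS c x \<bullet> MS c x) = (2 / (1 - (norm x)^2 / c^2))^2 * (norm x)^2"
    unfolding MS_def using q by (simp add: power2_norm_eq_inner[symmetric] power_mult_distrib power_divide)
  moreover have gen: "\<And>q::real. q < 1 \<Longrightarrow> (2 / (1 - q))^2 * q = ((1+q)/(1-q))^2 - 1"
  proof -
    fix q :: real assume "q < 1"
    define r where "r = 1 - q"
    have r: "r \<noteq> 0" "q = 1 - r" using \<open>q<1\<close> by (auto simp: r_def)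
    show "(2 / (1 - q))^2 * q = ((1+q)/(1-q))^2 - 1" unfolding r(2) using r(1)
      by (simp add: field_simps power2_eq_square)
  qed
  ultimately show ?thesis using gen[OF q] unfolding MT_def by (simp add: mult.assoc)
qed

lemma MS_inv: assumes "c > 0" "norm (x::'a::real_inner) < c"
  shows "x = (1 / (1 + MT c x)) *\<^sub>R MS c x"
proof -
  have q: "(norm x)^2 / c^2 < 1" using q_lt1[OF assms] by auto
  have gen: "\<And>q::real. q < 1 \<Longrightarrow> (1 / (1 + (1+q)/(1-q))) * (2 / (1 - q)) = 1"
    by (simp add: field_simps)
  have "(1 / (1 + MT c x)) * (2 / (1 - (norm x)^2 / c^2)) = 1"
    using gen[OF q] unfolding MT_def .
  thus ?thesis unfolding MS_def by simp
qed

lemma MS_neg[simp]: "MS c (-x) = - MS c x" unfolding MS_def by simp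
lemma MT_neg[simp]: "MT c (-x) = MT c x" unfolding MT_def by simp

lemma mobius_add_expand:
  "mobius_add c h x = (1 / (1 + (2 / c^2) * (h \<bullet> x) + (1 / c^4) * (norm h)^2 * (norm x)^2)) *\<^sub>R
     ((1 + (2 / c^2) * (h \<bullet> x) + (1 / c^2) * (norm x)^2) *\<^sub>R h
      + (1 - (1 / c^2) * (norm h)^2) *\<^sub>R x)" by (simp add: mobius_add_def)

lemma delta_pos: assumes "c > 0" "norm (h::'a::real_inner) < c" "norm x < c"
  shows "1 + (2 / c^2) * (h \<bullet> x) + (1 / c^4) * (norm h)^2 * (norm x)^2 > 0"
proof -
  define qh where "qh = (norm h)^2 / c^2"
  define qx where "qx = (norm x)^2 / c^2"
  define p where "p = (h \<bullet> x) / c^2"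
  have qh: "0 \<le> qh" "qh < 1" using q_lt1[OF assms(1,2)] by (auto simp: qh_def)
  have qx: "0 \<le> qx" "qx < 1" using q_lt1[OF assms(1,3)] by (auto simp: qx_def)
  have cs: "(h \<bullet> x)^2 \<le> (norm h)^2 * (norm x)^2"
    using Cauchy_Schwarz_ineq[of h x] by (simp add: power2_norm_eq_inner)
  have "p^2 \<le> qh * qx" using cs assms(1) unfolding p_def qh_def qx_def
    by (simp add: power_divide field_simps power2_eq_square)
  have qq: "0 \<le> qh*qx" "qh * qx < 1" using qh qx by (auto simp: mult_nonneg_nonneg) (smt (verit) mult_left_le)
  have "(1 + qh*qx)^2 - 4 * (qh*qx) = (1 - qh*qx)^2" by (simp add: power2_eq_square algebra_simps)
  moreover have "(1 - qh*qx)^2 > 0" using qq by simp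
  ultimately have "4*p^2 < (1 + qh*qx)^2" using \<open>p^2 \<le> qh * qx\<close> by linarith
  hence "(2*\<bar>p\<bar>)^2 < (1 + qh*qx)^2" by (simp add: power_mult_distrib)
  moreover have "0 \<le> 1 + qh*qx" using qq by simp
  ultimately have "2 * \<bar>p\<bar> < 1 + qh*qx" by (rule power_less_imp_less_base)
  hence "1 + 2 * p + qh * qx > 0" by linarith
  moreover have "1 + (2 / c^2) * (h \<bullet> x) + (1 / c^4) * (norm h)^2 * (norm x)^2 = 1 + 2 * p + qh * qx"
    unfolding p_def qh_def qx_def using assms(1) by (simp add: field_simps power2_eq_square eval_nat_numeral)
  ultimately show ?thesis by simp
qed

lemma madd_q:
  fixes h x :: "'a::real_inner"
  assumes "c > 0"
  defines "qh \<equiv> (norm h)^2 / c^2" and "qx \<equiv> (norm x)^2 / c^2" and "p \<equiv> (h \<bullet> x) / c^2"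
  shows "mobius_add c h x = (1/(1+2*p+qh*qx)) *\<^sub>R ((1+2*p+qx) *\<^sub>R h + (1-qh) *\<^sub>R x)"
proof -
  have "(2 / c^2) * (h \<bullet> x) = 2*p" "(1 / c^4) * (norm h)^2 * (norm x)^2 = qh*qx"
    "(1 / c^2) * (norm x)^2 = qx" "(1 / c^2) * (norm h)^2 = qh"
    unfolding p_def qh_def qx_def using assms(1) by (simp_all add: field_simps power2_eq_square eval_nat_numeral)
  thus ?thesis unfolding mobius_add_def by simp
qed

lemma lin_norm_q:
  fixes h x :: "'a::real_inner"
  assumes "c > 0"
  defines "qh \<equiv> (norm h)^2 / c^2" and "qx \<equiv> (norm x)^2 / c^2" and "p \<equiv> (h \<bullet> x) / c^2"
  shows "(norm (a *\<^sub>R h + b *\<^sub>R x))^2 / c^2 = a^2 * qh + 2*a*b*p + b^2 * qx"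
proof -
  have "(norm (a *\<^sub>R h + b *\<^sub>R x))^2 = a^2 * (h \<bullet> h) + 2*a*b*(h \<bullet> x) + b^2 * (x \<bullet> x)"
    unfolding power2_norm_eq_inner by (simp add: inner_add_left inner_add_right inner_commute[of x h] power2_eq_square algebra_simps)
  moreover have "h \<bullet> h = (norm h)^2" "x \<bullet> x = (norm x)^2" by (simp_all add: power2_norm_eq_inner)
  ultimately show ?thesis unfolding qh_def qx_def p_def using assms(1) by (simp add: field_simps)
qed

lemma madd_norm:
  fixes h x :: "'a::real_inner"
  assumes "c > 0" "norm h < c" "norm x < c"
  defines "qh \<equiv> (norm h)^2 / c^2" and "qx \<equiv> (norm x)^2 / c^2" and "p \<equiv> (h \<bullet> x) / c^2"
  shows "1 - (norm (mobius_add c h x))^2 / c^2 = (1-qh)*(1-qx)/(1+2*p+qh*qx)"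
    and "1+2*p+qh*qx > 0"
proof -
  have dp: "1 + (2 / c^2) * (h \<bullet> x) + (1 / c^4) * (norm h)^2 * (norm x)^2 > 0"
    using delta_pos[OF assms(1-3)] .
  moreover have "1 + (2 / c^2) * (h \<bullet> x) + (1 / c^4) * (norm h)^2 * (norm x)^2 = 1+2*p+qh*qx"
    unfolding p_def qh_def qx_def using assms(1) by (simp add: field_simps power2_eq_square eval_nat_numeral)
  ultimately show d: "1+2*p+qh*qx > 0" by simp
  define d where "d = 1+2*p+qh*qx"
  have "(norm (mobius_add c h x))^2 / c^2 = (norm ((1/d) *\<^sub>R ((1+2*p+qx) *\<^sub>R h + (1-qh) *\<^sub>R x)))^2 / c^2"
    unfolding madd_q[OF assms(1)] d_def qh_def qx_def p_def ..
  also have "\<dots> = (1/d)^2 * ((norm ((1+2*p+qx) *\<^sub>R h + (1-qh) *\<^sub>R x))^2 / c^2)"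
    by (simp only: norm_scaleR power_mult_distrib power2_abs times_divide_eq_right)
  also have "\<dots> = (1/d)^2 * ((1+2*p+qx)^2 * qh + 2*(1+2*p+qx)*(1-qh)*p + (1-qh)^2 * qx)"
    unfolding lin_norm_q[OF assms(1)] qh_def qx_def p_def ..
  finally have n: "(norm (mobius_add c h x))^2 / c^2 = (1/d)^2 * ((1+2*p+qx)^2 * qh + 2*(1+2*p+qx)*(1-qh)*p + (1-qh)^2 * qx)" .
  have id: "d^2 - ((1+2*p+qx)^2 * qh + 2*(1+2*p+qx)*(1-qh)*p + (1-qh)^2 * qx) = (1-qh)*(1-qx)*d"
    unfolding d_def by (simp add: power2_eq_square algebra_simps)
  have "d > 0" using d d_def by simp
  show "1 - (norm (mobius_add c h x))^2 / c^2 = (1-qh)*(1-qx)/(1+2*p+qh*qx)"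
  proof -
    have N: "(1+2*p+qx)^2 * qh + 2*(1+2*p+qx)*(1-qh)*p + (1-qh)^2 * qx = d^2 - (1-qh)*(1-qx)*d"
      using id by simp
    show ?thesis unfolding n d_def[symmetric] N using \<open>d>0\<close> by (simp add: field_simps power2_eq_square)
  qed
qed

lemma madd_ball:
  fixes h x :: "'a::real_inner"
  assumes "c > 0" "norm h < c" "norm x < c"
  shows "norm (mobius_add c h x) < c"
proof -
  have a: "(norm h)^2 / c^2 < 1" "(norm x)^2 / c^2 < 1" using q_lt1 assms by auto
  have "1 - (norm (mobius_add c h x))^2 / c^2 > 0"
    unfolding madd_norm(1)[OF assms] using madd_norm(2)[OF assms] a by simp
  hence "(norm (mobius_add c h x))^2 < c^2" using assms(1) by (simp add: field_simps)
  thus ?thesis using assms(1) by (smt (verit) power_mono norm_ge_zero)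
qed

lemma sc1: fixes qh qx d p :: real
  assumes "qh \<noteq> 1" "qx \<noteq> 1" "d \<noteq> 0" "d = 1 + 2*p + qh*qx"
  shows "(2 - (1-qh)*(1-qx)/d)/((1-qh)*(1-qx)/d) = (1+qh)/(1-qh)*((1+qx)/(1-qx)) + (2/(1-qh))*(2/(1-qx))*p"
proof -
  define a where "a = 1 - qh"
  define b where "b = 1 - qx"
  have ab: "qh = 1 - a" "qx = 1 - b" "a \<noteq> 0" "b \<noteq> 0" using assms(1,2) by (auto simp: a_def b_def)
  have p: "p = (d - 1 - (1-a)*(1-b))/2" using assms(4) ab by simp
  have "(2 - a*b/d)/(a*b/d) = ((1+(1-a))/a)*((1+(1-b))/b) + (2/a)*(2/b)*((d - 1 - (1-a)*(1-b))/2)"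
    using ab(3,4) assms(3) by (simp add: field_simps)
  thus ?thesis unfolding p a_def b_def by simp
qed

lemma sc2: fixes qh qx p :: real
  assumes "qh \<noteq> 1" "qx \<noteq> 1"
  shows "2*(1+2*p+qx)/((1-qh)*(1-qx)) = (((2/(1-qh))*(2/(1-qx))*p) / (1+(1+qh)/(1-qh)) + (1+qx)/(1-qx)) * (2/(1-qh))"
proof -
  define a where "a = 1 - qh"
  define b where "b = 1 - qx"
  have ab: "a \<noteq> 0" "b \<noteq> 0" using assms(1,2) by (auto simp: a_def b_def)
  have e: "1+(1+(1-a))/a = 2/a" using ab by (simp add: field_simps)
  have "2*(1+2*p+(1-b))/(a*b) = (((2/a)*(2/b)*p) / (2/a) + (1+(1-b))/b) * (2/a)"
    using ab by (simp add: field_simps)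
  thus ?thesis using e unfolding a_def b_def by simp
qed

lemma boost:
  fixes h x :: "'a::real_inner"
  assumes "c > 0" "norm h < c" "norm x < c"
  shows "MT c (mobius_add c h x) = MT c h * MT c x + (MS c h \<bullet> MS c x)/c^2"
    and "MS c (mobius_add c h x) = MS c x + ((MS c h \<bullet> MS c x)/(c^2*(1+MT c h)) + MT c x) *\<^sub>R MS c h"
proof -
  define qh where "qh = (norm h)^2 / c^2"
  define qx where "qx = (norm x)^2 / c^2"
  define p where "p = (h \<bullet> x) / c^2"
  define d where "d = 1+2*p+qh*qx"
  have qh: "qh < 1" "0 \<le> qh" using q_lt1[OF assms(1,2)] by (auto simp: qh_def)
  have qx: "qx < 1" "0 \<le> qx" using q_lt1[OF assms(1,3)] by (auto simp: qx_def)
  have d: "d > 0" using madd_norm(2)[OF assms] unfolding d_def qh_def qx_def p_def .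
  have r: "1 - (norm (mobius_add c h x))^2 / c^2 = (1-qh)*(1-qx)/d"
    using madd_norm(1)[OF assms] unfolding d_def qh_def qx_def p_def .
  have add: "mobius_add c h x = (1/d) *\<^sub>R ((1+2*p+qx) *\<^sub>R h + (1-qh) *\<^sub>R x)"
    using madd_q[OF assms(1)] unfolding d_def qh_def qx_def p_def .
  have MTh: "MT c h = (1+qh)/(1-qh)" and MTx: "MT c x = (1+qx)/(1-qx)"
    unfolding MT_def qh_def qx_def by simp_all
  have MSh: "MS c h = (2/(1-qh)) *\<^sub>R h" and MSx: "MS c x = (2/(1-qx)) *\<^sub>R x"
    unfolding MS_def qh_def qx_def by simp_all
  have ip: "(MS c h \<bullet> MS c x)/c^2 = (2/(1-qh))*(2/(1-qx))*p"
    unfolding MSh MSx p_def by simp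
  have MTr: "MT c (mobius_add c h x) = (2 - (1-qh)*(1-qx)/d)/((1-qh)*(1-qx)/d)"
    unfolding MT_def r[symmetric] by simp
  show "MT c (mobius_add c h x) = MT c h * MT c x + (MS c h \<bullet> MS c x)/c^2"
    unfolding MTr MTh MTx ip by (rule sc1) (use qh qx d in \<open>auto simp: d_def\<close>)
  have MSr: "MS c (mobius_add c h x) = (2/((1-qh)*(1-qx)/d)) *\<^sub>R mobius_add c h x"
    unfolding MS_def r[symmetric] by simp
  also have "\<dots> = (2*(1+2*p+qx)/((1-qh)*(1-qx))) *\<^sub>R h + (2*(1-qh)/((1-qh)*(1-qx))) *\<^sub>R x"
  proof -
    have k: "(2/((1-qh)*(1-qx)/d)) * (1/d) = 2/((1-qh)*(1-qx))" using d by simp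
    have k2: "2/((1-qh)*(1-qx)) * (1-qh) = 2*(1-qh)/((1-qh)*(1-qx))" by simp
    show ?thesis unfolding add scaleR_scaleR k scaleR_add_right k2
      using d by (simp add: mult.commute)
  qed
  also have "\<dots> = MS c x + ((MS c h \<bullet> MS c x)/(c^2*(1+MT c h)) + MT c x) *\<^sub>R MS c h"
  proof -
    have e1: "(MS c h \<bullet> MS c x)/(c^2*(1+MT c h)) = ((2/(1-qh))*(2/(1-qx))*p) / (1+MT c h)"
      unfolding divide_divide_eq_left[symmetric] ip ..
    have c1: "2*(1+2*p+qx)/((1-qh)*(1-qx)) = (((2/(1-qh))*(2/(1-qx))*p) / (1+(1+qh)/(1-qh)) + (1+qx)/(1-qx)) * (2/(1-qh))"
      by (rule sc2) (use qh qx in auto)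
    have c2: "2*(1-qh)/((1-qh)*(1-qx)) = 2/(1-qx)" using qh qx
      by (metis (no_types) mult.commute mult_divide_mult_cancel_left_if  less_irrefl right_minus_eq)
    show ?thesis unfolding e1 unfolding MSx MSh MTh unfolding MTx c1 c2 by (simp add: algebra_simps)
  qed
  finally show "MS c (mobius_add c h x) = MS c x + ((MS c h \<bullet> MS c x)/(c^2*(1+MT c h)) + MT c x) *\<^sub>R MS c h" .
qed

lemma coadd_scalar: fixes Ta Tb g :: real
  assumes a1: "1+Ta \<noteq> 0" and a2: "1+(Ta*Tb-g) \<noteq> 0" and a3: "Ta+Tb \<noteq> 0"
  shows "- (((Tb - g/(1+Ta))*(Ta^2-1) - g)/(1+(Ta*Tb-g)) - Ta) /
           (1 + (Ta*((Ta*Tb-g)*Ta - ((Tb - g/(1+Ta))*(Ta^2-1) - g)) + ((Ta^2-1) + (((Tb - g/(1+Ta))*(Ta^2-1) - g)/(1+(Ta*Tb-g)) - Ta)*((Tb - g/(1+Ta))*(Ta^2-1) - g))))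
         = 1/(Ta+Tb)"
  and "(1 + (((Tb - g/(1+Ta))*(Ta^2-1) - g)/(1+(Ta*Tb-g)) - Ta)*(Tb - g/(1+Ta)) + ((Ta^2-1) + (((Tb - g/(1+Ta))*(Ta^2-1) - g)/(1+(Ta*Tb-g)) - Ta)*((Tb - g/(1+Ta))*(Ta^2-1) - g))/(1+Ta) + ((Ta*Tb-g)*Ta - ((Tb - g/(1+Ta))*(Ta^2-1) - g))) /
           (1 + (Ta*((Ta*Tb-g)*Ta - ((Tb - g/(1+Ta))*(Ta^2-1) - g)) + ((Ta^2-1) + (((Tb - g/(1+Ta))*(Ta^2-1) - g)/(1+(Ta*Tb-g)) - Ta)*((Tb - g/(1+Ta))*(Ta^2-1) - g))))
         = 1/(Ta+Tb)"
proof -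
  define D where "D = 1+(Ta*Tb-g)"
  have D: "D \<noteq> 0" using a2 D_def by simp
  have K: "(Tb - g/(1+Ta))*(Ta^2-1) - g = Tb*(Ta^2-1) - g*Ta"
    using a1 by (simp add: field_simps power2_eq_square)
  have Tw: "(Ta*Tb-g)*Ta - (Tb*(Ta^2-1) - g*Ta) = Tb" by (simp add: algebra_simps power2_eq_square)
  have kap: "(Tb*(Ta^2-1) - g*Ta)/D - Ta = -(Ta+Tb)/D"
    using D unfolding D_def by (simp add: field_simps power2_eq_square; simp add: algebra_simps)
  have Tr: "1 + (Ta*Tb + ((Ta^2-1) + (-(Ta+Tb)/D)*(Tb*(Ta^2-1) - g*Ta))) = (Ta+Tb)^2/D"
    using D unfolding D_def by (simp add: field_simps power2_eq_square; simp add: algebra_simps)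
  have zK: "(Tb - g/(1+Ta)) + (Tb*(Ta^2-1) - g*Ta)/(1+Ta) = D - 1"
  proof -
    have f: "Tb*(Ta^2-1) - g*Ta - g = (1+Ta)*(Tb*(Ta-1) - g)" by (simp add: algebra_simps power2_eq_square)
    have "(Tb - g/(1+Ta)) + (Tb*(Ta^2-1) - g*Ta)/(1+Ta) = Tb + (Tb*(Ta^2-1) - g*Ta - g)/(1+Ta)"
      by (simp add: diff_divide_distrib)
    also have "\<dots> = Tb + (Tb*(Ta-1) - g)" unfolding f using a1 by simp
    finally show ?thesis unfolding D_def by (simp add: algebra_simps)
  qed
  have S2: "1 + (-(Ta+Tb)/D)*(Tb - g/(1+Ta)) + ((Ta^2-1) + (-(Ta+Tb)/D)*(Tb*(Ta^2-1) - g*Ta))/(1+Ta) + Tb = (Ta+Tb)/D"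
  proof -
    have q: "(Ta^2-1)/(1+Ta) = Ta - 1" using a1 by (simp add: field_simps power2_eq_square)
    have gen: "\<And>z k e s. 1 + (-s/D)*z + (e + (-s/D)*k)/(1+Ta) + Tb = 1 + e/(1+Ta) + Tb - (s/D)*(z + k/(1+Ta))"
      by (simp add: add_divide_distrib diff_divide_distrib algebra_simps)
    have "1 + (-(Ta+Tb)/D)*(Tb - g/(1+Ta)) + ((Ta^2-1) + (-(Ta+Tb)/D)*(Tb*(Ta^2-1) - g*Ta))/(1+Ta) + Tb
       = 1 + (Ta^2-1)/(1+Ta) + Tb - ((Ta+Tb)/D) * ((Tb - g/(1+Ta)) + (Tb*(Ta^2-1) - g*Ta)/(1+Ta))"
      by (rule gen)
    also have "\<dots> = Ta + Tb - ((Ta+Tb)/D) * ((Tb - g/(1+Ta)) + (Tb*(Ta^2-1) - g*Ta)/(1+Ta))"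
      unfolding q by simp
    also have "\<dots> = (Ta+Tb)/D" unfolding zK using D by (simp add: field_simps)
    finally show ?thesis .
  qed
  have fin: "(Ta+Tb)/D / ((Ta+Tb)^2/D) = 1/(Ta+Tb)" using D a3 by (simp add: power2_eq_square)
  have fin1: "- (-(Ta+Tb)/D) / ((Ta+Tb)^2/D) = 1/(Ta+Tb)" unfolding minus_divide_left[symmetric] minus_minus by (rule fin)
  show "- (((Tb - g/(1+Ta))*(Ta^2-1) - g)/(1+(Ta*Tb-g)) - Ta) /
           (1 + (Ta*((Ta*Tb-g)*Ta - ((Tb - g/(1+Ta))*(Ta^2-1) - g)) + ((Ta^2-1) + (((Tb - g/(1+Ta))*(Ta^2-1) - g)/(1+(Ta*Tb-g)) - Ta)*((Tb - g/(1+Ta))*(Ta^2-1) - g))))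
         = 1/(Ta+Tb)"
    unfolding K D_def[symmetric] Tw kap Tr by (rule fin1)
  show "(1 + (((Tb - g/(1+Ta))*(Ta^2-1) - g)/(1+(Ta*Tb-g)) - Ta)*(Tb - g/(1+Ta)) + ((Ta^2-1) + (((Tb - g/(1+Ta))*(Ta^2-1) - g)/(1+(Ta*Tb-g)) - Ta)*((Tb - g/(1+Ta))*(Ta^2-1) - g))/(1+Ta) + ((Ta*Tb-g)*Ta - ((Tb - g/(1+Ta))*(Ta^2-1) - g))) /
           (1 + (Ta*((Ta*Tb-g)*Ta - ((Tb - g/(1+Ta))*(Ta^2-1) - g)) + ((Ta^2-1) + (((Tb - g/(1+Ta))*(Ta^2-1) - g)/(1+(Ta*Tb-g)) - Ta)*((Tb - g/(1+Ta))*(Ta^2-1) - g))))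
         = 1/(Ta+Tb)"
    unfolding K D_def[symmetric] Tw kap Tr S2 by (rule fin)
qed

lemma madd_neg_self: "mobius_add c (-b) b = 0"
  unfolding mobius_add_def by (simp add: power2_norm_eq_inner algebra_simps)

lemma madd_zero: "mobius_add c a 0 = a"
  unfolding mobius_add_def by simp

lemma neg_ball: "norm (-x) < c \<longleftrightarrow> norm (x::'a::real_normed_vector) < c" by simp

lemma coadd_formula:
  fixes a b :: "'a::real_inner"
  assumes c: "c > 0" and a: "norm a < c" and b: "norm b < c"
  shows "mobius_coadd c a b = (1/(MT c a + MT c b)) *\<^sub>R (MS c a + MS c b)"
proof -
  define z where "z = mobius_add c a (-b)"
  define w where "w = mobius_add c (-z) a"
  define r where "r = mobius_add c a w"
  have co: "mobius_coadd c a b = r"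
    unfolding mobius_coadd_def mobius_gyr_def madd_neg_self madd_zero r_def w_def z_def ..
  have zb: "norm z < c" unfolding z_def using madd_ball[OF c a] b by simp
  have wb: "norm w < c" unfolding w_def using madd_ball[OF c _ a] zb by simp
  define Sa where "Sa = MS c a"
  define Sb where "Sb = MS c b"
  define Ta where "Ta = MT c a"
  define Tb where "Tb = MT c b"
  define g where "g = (Sa \<bullet> Sb)/c^2"
  define zeta where "zeta = Tb - g/(1+Ta)"
  define K where "K = zeta*(Ta^2-1) - g"
  define Tz where "Tz = Ta*Tb - g"
  define kap where "kap = K/(1+Tz) - Ta"
  define Tw where "Tw = Tz*Ta - K"
  define L where "L = (Ta^2-1) + kap*K"
  define Tr where "Tr = Ta*Tw + L"
  have Ta1: "Ta \<ge> 1" unfolding Ta_def using MT_ge1[OF c a] .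
  have Tb1: "Tb \<ge> 1" unfolding Tb_def using MT_ge1[OF c b] .
  have nSa: "(Sa \<bullet> Sa)/c^2 = Ta^2 - 1" unfolding Sa_def Ta_def using MS_norm[OF c a] .
  have ip1: "(Sa \<bullet> MS c (-b))/c^2 = -g" unfolding g_def Sb_def Sa_def by simp
  have ip2: "(Sa \<bullet> MS c (-b))/(c^2*(1+Ta)) = -g/(1+Ta)"
    unfolding divide_divide_eq_left[symmetric] ip1 ..
  have MTz: "MT c z = Tz" unfolding z_def boost(1)[OF c a neg_ball[THEN iffD2, OF b]] Sa_def[symmetric] Ta_def[symmetric] ip1
    Tz_def Tb_def by simp
  have MSz: "MS c z = zeta *\<^sub>R Sa - Sb"
    unfolding z_def boost(2)[OF c a neg_ball[THEN iffD2, OF b]] Sa_def[symmetric] Ta_def[symmetric] ip2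
    zeta_def Sb_def Tb_def by (simp add: algebra_simps)
  have Tz1: "Tz \<ge> 1" using MT_ge1[OF c zb] MTz by simp
  have Kf: "(MS c z \<bullet> Sa)/c^2 = K"
  proof -
    have "(MS c z \<bullet> Sa)/c^2 = zeta * ((Sa \<bullet> Sa)/c^2) - (Sa \<bullet> Sb)/c^2"
      unfolding MSz by (simp add: inner_diff_left inner_diff_right inner_commute diff_divide_distrib)
    thus ?thesis unfolding nSa K_def g_def .
  qed
  have ip3: "(MS c (-z) \<bullet> Sa)/c^2 = -K" using Kf by simp
  have ip4: "(MS c (-z) \<bullet> Sa)/(c^2*(1+MT c (-z))) = -K/(1+Tz)"
    unfolding divide_divide_eq_left[symmetric] ip3 MT_neg MTz ..
  have MTw: "MT c w = Tw" unfolding w_def boost(1)[OF c neg_ball[THEN iffD2, OF zb] a] Sa_def[symmetric] Ta_def[symmetric] ip3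
    MT_neg MTz Tw_def by simp
  have MSw: "MS c w = Sa + kap *\<^sub>R MS c z"
    unfolding w_def boost(2)[OF c neg_ball[THEN iffD2, OF zb] a] Sa_def[symmetric] Ta_def[symmetric]
    unfolding ip4 unfolding kap_def MS_neg by (simp add: algebra_simps)
  have Lf: "(Sa \<bullet> MS c w)/c^2 = L"
  proof -
    have "(Sa \<bullet> MS c w)/c^2 = (Sa \<bullet> Sa)/c^2 + kap * ((MS c z \<bullet> Sa)/c^2)"
      unfolding MSw by (simp add: inner_add_right inner_commute add_divide_distrib)
    thus ?thesis unfolding nSa Kf L_def .
  qed
  have Lf2: "(Sa \<bullet> MS c w)/(c^2*(1+Ta)) = L/(1+Ta)"
    unfolding divide_divide_eq_left[symmetric] Lf ..
  have MTr: "MT c r = Tr" unfolding r_def boost(1)[OF c a wb] Sa_def[symmetric] Ta_def[symmetric] Lf MTw Tr_def ..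
  have MSr: "MS c r = (1 + kap*zeta + L/(1+Ta) + Tw) *\<^sub>R Sa + (-kap) *\<^sub>R Sb"
    unfolding r_def boost(2)[OF c a wb] Sa_def[symmetric] Ta_def[symmetric] unfolding Lf2 MTw unfolding MSw MSz
    by (simp add: algebra_simps)
  have rr0: "r = (1/(1+MT c r)) *\<^sub>R MS c r" unfolding r_def by (rule MS_inv[OF c madd_ball[OF c a wb]])
  have rr: "r = (1/(1+Tr)) *\<^sub>R ((1 + kap*zeta + L/(1+Ta) + Tw) *\<^sub>R Sa + (-kap) *\<^sub>R Sb)"
    using rr0 unfolding MTr MSr .
  have nz: "1 + Ta \<noteq> 0" "1 + (Ta*Tb - g) \<noteq> 0" "Ta + Tb \<noteq> 0" using Ta1 Tb1 Tz1 unfolding Tz_def by auto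
  have s1: "-kap/(1+Tr) = 1/(Ta+Tb)"
    unfolding kap_def Tr_def Tw_def L_def kap_def K_def zeta_def Tz_def by (rule coadd_scalar(1)[OF nz])
  have s2: "(1 + kap*zeta + L/(1+Ta) + Tw)/(1+Tr) = 1/(Ta+Tb)"
    unfolding kap_def Tr_def Tw_def L_def kap_def K_def zeta_def Tz_def by (rule coadd_scalar(2)[OF nz])
  have "r = ((1 + kap*zeta + L/(1+Ta) + Tw)/(1+Tr)) *\<^sub>R Sa + (-kap/(1+Tr)) *\<^sub>R Sb"
    by (subst rr) (simp add: scaleR_add_right scaleR_diff_right)
  also have "\<dots> = (1/(Ta+Tb)) *\<^sub>R (Sa + Sb)" unfolding s1 s2 by (simp add: scaleR_add_right)
  finally show ?thesis unfolding co Sa_def Sb_def Ta_def Tb_def .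
qed


lemma MS_MT_zero[simp]: "MS c 0 = 0" "MT c 0 = 1" unfolding MS_def MT_def by simp_all

lemma left_cancel:
  fixes h x :: "'a::real_inner"
  assumes c: "c > 0" and h: "norm h < c" and x: "norm x < c"
  shows "mobius_add c h (mobius_add c (-h) x) = x"
proof -
  define y where "y = mobius_add c (-h) x"
  have yb: "norm y < c" unfolding y_def using madd_ball[OF c _ x] h by simp
  define Sh where "Sh = MS c h"
  define Sx where "Sx = MS c x"
  define Th where "Th = MT c h"
  define Tx where "Tx = MT c x"
  define g where "g = (Sh \<bullet> Sx)/c^2"
  have Th1: "Th \<ge> 1" unfolding Th_def using MT_ge1[OF c h] .
  have nSh: "(Sh \<bullet> Sh)/c^2 = Th^2 - 1" unfolding Sh_def Th_def using MS_norm[OF c h] .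
  have hb: "norm (-h) < c" using h by simp
  have ip1: "(MS c (-h) \<bullet> Sx)/c^2 = -g" unfolding g_def Sh_def Sx_def by simp
  have ip2: "(MS c (-h) \<bullet> Sx)/(c^2*(1+MT c (-h))) = -g/(1+Th)"
    unfolding divide_divide_eq_left[symmetric] ip1 Th_def by simp
  have Ty: "MT c y = Th*Tx - g" unfolding y_def boost(1)[OF c hb x] Sx_def[symmetric] unfolding ip1 Th_def Tx_def by simp
  have Sy: "MS c y = Sx + (g/(1+Th) - Tx) *\<^sub>R Sh"
    unfolding y_def boost(2)[OF c hb x] Sx_def[symmetric] unfolding ip2 Tx_def[symmetric] Sh_def
    by (simp add: algebra_simps)
  have ip3: "(Sh \<bullet> MS c y)/c^2 = g + (g/(1+Th) - Tx)*(Th^2-1)"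
  proof -
    have "(Sh \<bullet> MS c y)/c^2 = (Sh \<bullet> Sx)/c^2 + (g/(1+Th) - Tx)*((Sh \<bullet> Sh)/c^2)"
      unfolding Sy by (simp add: inner_add_right add_divide_distrib)
    thus ?thesis unfolding nSh g_def .
  qed
  have ip4: "(Sh \<bullet> MS c y)/(c^2*(1+Th)) = (g + (g/(1+Th) - Tx)*(Th^2-1))/(1+Th)"
    unfolding divide_divide_eq_left[symmetric] ip3 ..
  have s1: "Th*(Th*Tx - g) + (g + (g/(1+Th) - Tx)*(Th^2-1)) = Tx"
  proof -
    have e: "(g/(1+Th))*(Th^2-1) = g*(Th-1)" using Th1 by (simp add: field_simps power2_eq_square)
    have e2: "(g/(1+Th) - Tx)*(Th^2-1) = g*(Th-1) - Tx*(Th^2-1)" by (simp only: left_diff_distrib e)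
    show ?thesis unfolding e2 by (simp add: algebra_simps power2_eq_square)
  qed
  have s2: "(g/(1+Th) - Tx) + ((g + (g/(1+Th) - Tx)*(Th^2-1))/(1+Th) + (Th*Tx - g)) = 0"
  proof -
    have e: "(g/(1+Th))*(Th^2-1) = g*(Th-1)" using Th1 by (simp add: field_simps power2_eq_square)
    have e2: "(g/(1+Th) - Tx)*(Th^2-1) = g*(Th-1) - Tx*(Th^2-1)" by (simp only: left_diff_distrib e)
    have "g + (g/(1+Th) - Tx)*(Th^2-1) = g*Th - (1+Th)*(Tx*(Th-1))" unfolding e2 by (simp add: algebra_simps power2_eq_square)
    hence "(g + (g/(1+Th) - Tx)*(Th^2-1))/(1+Th) = g*Th/(1+Th) - Tx*(Th-1)" using Th1 by (simp add: diff_divide_distrib)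
    moreover have "g/(1+Th) + g*Th/(1+Th) = g" using Th1 by (simp add: add_divide_distrib[symmetric] field_simps)
    ultimately show ?thesis by (simp add: algebra_simps)
  qed
  have T2: "MT c (mobius_add c h y) = Tx"
    unfolding boost(1)[OF c h yb] Sh_def[symmetric] Th_def[symmetric] Ty ip3 s1 ..
  have S2: "MS c (mobius_add c h y) = Sx"
  proof -
    have "MS c (mobius_add c h y) = Sx + ((g/(1+Th) - Tx) + ((g + (g/(1+Th) - Tx)*(Th^2-1))/(1+Th) + (Th*Tx - g))) *\<^sub>R Sh"
      unfolding boost(2)[OF c h yb] Sh_def[symmetric] Th_def[symmetric] unfolding ip4 Ty unfolding Sy
      by (simp add: algebra_simps)
    thus ?thesis unfolding s2 by simp
  qed
  have "mobius_add c h y = (1/(1+MT c (mobius_add c h y))) *\<^sub>R MS c (mobius_add c h y)"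
    by (rule MS_inv[OF c madd_ball[OF c h yb]])
  also have "\<dots> = x" unfolding T2 S2 Tx_def Sx_def by (rule MS_inv[OF c x, symmetric])
  finally show ?thesis unfolding y_def .
qed

lemma coadd_sub:
  fixes h B :: "'a::real_inner"
  assumes c: "c > 0" and h: "norm h < c" and B: "norm B < c"
  shows "mobius_coadd c h (mobius_add c B (-h)) = B"
proof -
  define q where "q = mobius_add c B (-h)"
  have hb: "norm (-h) < c" using h by simp
  have qb: "norm q < c" unfolding q_def using madd_ball[OF c B hb] .
  define Sh where "Sh = MS c h"
  define SB where "SB = MS c B"
  define Th where "Th = MT c h"
  define TB where "TB = MT c B"
  define g where "g = (SB \<bullet> Sh)/c^2"
  have Th1: "Th \<ge> 1" unfolding Th_def using MT_ge1[OF c h] .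
  have TB1: "TB \<ge> 1" unfolding TB_def using MT_ge1[OF c B] .
  have Tq1: "MT c q \<ge> 1" using MT_ge1[OF c qb] .
  have ip1: "(SB \<bullet> MS c (-h))/c^2 = -g" unfolding g_def Sh_def by simp
  have ip2: "(SB \<bullet> MS c (-h))/(c^2*(1+TB)) = -g/(1+TB)"
    unfolding divide_divide_eq_left[symmetric] ip1 ..
  have Tq: "MT c q = TB*Th - g" unfolding q_def boost(1)[OF c B hb] SB_def[symmetric] TB_def[symmetric] ip1 Th_def by simp
  have Sq: "MS c q = (Th - g/(1+TB)) *\<^sub>R SB - Sh"
    unfolding q_def boost(2)[OF c B hb] SB_def[symmetric] TB_def[symmetric] unfolding ip2 Th_def Sh_def
    by (simp add: algebra_simps)
  define m where "m = Th - g/(1+TB)"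
  have den: "Th + MT c q = (1+TB)*m" unfolding Tq m_def using TB1 by (simp add: field_simps)
  have m0: "m \<noteq> 0" using den Th1 Tq1 TB1 by auto
  have "mobius_coadd c h q = (1/(Th + MT c q)) *\<^sub>R (Sh + MS c q)"
    unfolding coadd_formula[OF c h qb] Th_def Sh_def ..
  also have "\<dots> = (1/(1+TB)) *\<^sub>R SB" unfolding den Sq m_def[symmetric] using m0 by simp
  also have "\<dots> = B" unfolding TB_def SB_def by (rule MS_inv[OF c B, symmetric])
  finally show ?thesis unfolding q_def .
qed


lemma tanh_artanh_real: assumes "\<bar>y\<bar> < (1::real)" shows "tanh (artanh y) = y"
proof -
  define X where "X = (1+y)/(1-y)"
  have X: "X > 0" unfolding X_def using assms by (auto simp: abs_less_iff)
  have a: "artanh y = ln (sqrt X)" unfolding artanh_def X_def[symmetric] using X by (simp add: ln_sqrt)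
  have "tanh (ln (sqrt X)) = ((sqrt X)^2 - 1)/((sqrt X)^2 + 1)" using X by (simp add: tanh_ln_real)
  also have "\<dots> = (X - 1)/(X + 1)" using X by simp
  also have "\<dots> = y"
  proof -
    have y1: "1 - y \<noteq> 0" using assms by (auto simp: abs_less_iff)
    have "X - 1 = (2*y)/(1-y)" "X + 1 = 2/(1-y)" unfolding X_def using y1 by (simp_all add: field_simps)
    thus ?thesis using y1 by simp
  qed
  finally show ?thesis unfolding a .
qed

lemma tanh_double: "tanh (2 * x) = 2 * tanh x / (1 + (tanh x)^2)" for x :: real
  using tanh_add[of x x] by (simp add: power2_eq_square mult_2[symmetric])



lemma smult_form:
  assumes "v \<noteq> 0"
  shows "mobius_smult c r v = tanh (r * artanh (norm v / c)) *\<^sub>R ((c / norm v) *\<^sub>R v)"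
  using assms unfolding mobius_smult_def by simp

lemma smult_ball:
  fixes v :: "'a::real_inner"
  assumes c: "c > 0" and v: "norm v < c"
  shows "norm (mobius_smult c r v) < c"
proof (cases "v = 0")
  case True thus ?thesis using c unfolding mobius_smult_def by simp
next
  case False
  have "norm (mobius_smult c r v) = \<bar>tanh (r * artanh (norm v / c))\<bar> * c"
    unfolding smult_form[OF False] using False c by (simp add: abs_mult)
  also have "\<dots> < 1 * c" using tanh_real_bounds[of "r * artanh (norm v / c)"] c
    by (intro mult_strict_right_mono) (auto simp: abs_less_iff)
  finally show ?thesis by simp
qed

lemma smult_one:
  fixes v :: "'a::real_inner"
  assumes c: "c > 0" and v: "norm v < c"
  shows "mobius_smult c 1 v = v"
proof (cases "v = 0")
  case True thus ?thesis unfolding mobius_smult_def by simp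
next
  case False
  have "\<bar>norm v / c\<bar> < 1" using c v by simp
  hence "tanh (artanh (norm v / c)) = norm v / c" by (rule tanh_artanh_real)
  thus ?thesis unfolding smult_form[OF False] using c False by simp
qed

lemma MS_over_MT:
  assumes "c > 0" "norm (x::'a::real_inner) < c"
  shows "(1 / MT c x) *\<^sub>R MS c x = (2 / (1 + (norm x)^2/c^2)) *\<^sub>R x"
proof -
  have q: "(norm x)^2 / c^2 < 1" "0 \<le> (norm x)^2 / c^2" using q_lt1[OF assms] by auto
  have gen: "\<And>q::real. q < 1 \<Longrightarrow> 0 \<le> q \<Longrightarrow> (1 / ((1+q)/(1-q))) * (2/(1-q)) = 2/(1+q)"
  proof -
    fix q :: real assume "q < 1" "0 \<le> q"
    hence n: "1 - q \<noteq> 0" "1 + q \<noteq> 0" by auto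
    have "(1 / ((1+q)/(1-q))) = (1-q)/(1+q)" by simp
    moreover have "\<And>a b::real. b \<noteq> 0 \<Longrightarrow> (b/a)*(2/b) = 2/a" by simp
    ultimately show "(1 / ((1+q)/(1-q))) * (2/(1-q)) = 2/(1+q)" using n by presburger
  qed
  show ?thesis unfolding MS_def MT_def using gen[OF q] by simp
qed

lemma half_smult:
  fixes A :: "'a::real_inner"
  assumes c: "c > 0" and A: "norm A < c"
  shows "A = (1 / MT c (mobius_smult c (1/2) A)) *\<^sub>R MS c (mobius_smult c (1/2) A)"
proof (cases "A = 0")
  case True thus ?thesis unfolding mobius_smult_def by simp
next
  case False
  define a where "a = artanh (norm A / c)"
  define k where "k = tanh ((1/2) * a)"
  have hA: "mobius_smult c (1/2) A = k *\<^sub>R ((c / norm A) *\<^sub>R A)"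
    unfolding smult_form[OF False] k_def a_def ..
  have hb: "norm (mobius_smult c (1/2) A) < c" by (rule smult_ball[OF c A])
  have nh: "(norm (mobius_smult c (1/2) A))^2 / c^2 = k^2"
    unfolding hA using False c by (simp add: power_mult_distrib power2_abs)
  have "tanh a = norm A / c" unfolding a_def by (rule tanh_artanh_real) (use c A in simp)
  moreover have "tanh a = 2 * k / (1 + k^2)" unfolding k_def using tanh_double[of "(1/2)*a"] by simp
  ultimately have kk: "2 * k / (1 + k^2) = norm A / c" by simp
  have "(1 / MT c (mobius_smult c (1/2) A)) *\<^sub>R MS c (mobius_smult c (1/2) A)
      = (2 / (1 + k^2)) *\<^sub>R (k *\<^sub>R ((c / norm A) *\<^sub>R A))"
    unfolding MS_over_MT[OF c hb] nh unfolding hA ..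
  also have "\<dots> = ((2 * k / (1 + k^2)) * (c / norm A)) *\<^sub>R A" by (simp only: scaleR_scaleR times_divide_eq_left mult.assoc)
  also have "\<dots> = A" unfolding kk using False c by simp
  finally show ?thesis by simp
qed

lemma pform_scalar: fixes t Th ge :: real
  assumes t: "\<bar>t\<bar> < 1" and Th: "Th \<ge> 1" and D: "Th + t*ge > 0"
  shows "(2/(1-t^2)*t) / (Th + (Th*((1+t^2)/(1-t^2)) + (2/(1-t^2)*t)*ge)) = t/(Th+t*ge)"
    and "(1 + (2/(1-t^2)*t)*ge/(1+Th) + (1+t^2)/(1-t^2)) / (Th + (Th*((1+t^2)/(1-t^2)) + (2/(1-t^2)*t)*ge))
         = (1 + t*ge/(1+Th))/(Th+t*ge)"
proof -
  define d where "d = 1 - t^2"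
  have e1: "1 - t^2 = d" unfolding d_def by simp
  have e2: "1 + t^2 = 2 - d" unfolding d_def by simp
  have d0: "d > 0" unfolding d_def using t by (simp add: abs_square_less_1)
  have den: "Th + (Th*((1+t^2)/(1-t^2)) + (2/(1-t^2)*t)*ge) = 2*(Th+t*ge)/d"
    unfolding e1 e2 using d0 by (simp add: field_simps)
  have Th0: "1 + Th \<noteq> 0" using Th by simp
  have num: "1 + (2/(1-t^2)*t)*ge/(1+Th) + (1+t^2)/(1-t^2) = 2*(1 + t*ge/(1+Th))/d"
  proof -
    have a1: "(2/d*t)*ge/(1+Th) = 2*(t*ge/(1+Th))/d" by (simp add: mult.commute mult.left_commute)
    have gen: "\<And>Y. 1 + 2*Y/d + (2-d)/d = 2*(1+Y)/d" using d0 by (simp add: field_simps)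
    show ?thesis unfolding e1 e2 a1 by (rule gen)
  qed
  show "(2/(1-t^2)*t) / (Th + (Th*((1+t^2)/(1-t^2)) + (2/(1-t^2)*t)*ge)) = t/(Th+t*ge)"
    unfolding den unfolding e1 e2 using d0 D by (simp add: field_simps)
  show "(1 + (2/(1-t^2)*t)*ge/(1+Th) + (1+t^2)/(1-t^2)) / (Th + (Th*((1+t^2)/(1-t^2)) + (2/(1-t^2)*t)*ge))
         = (1 + t*ge/(1+Th))/(Th+t*ge)"
  proof -
    have gen: "\<And>X Dn. (2*X/d)/(2*Dn/d) = X/Dn" using d0 by (simp add: field_simps)
    show ?thesis unfolding den num by (rule gen)
  qed
qed

lemma coadd_ball:
  fixes a b :: "'a::real_inner"
  assumes c: "c > 0" and a: "norm a < c" and b: "norm b < c"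
  shows "norm (mobius_coadd c a b) < c"
proof -
  have z: "norm (mobius_add c a (-b)) < c" using madd_ball[OF c a] b by simp
  have w: "norm (mobius_add c (- mobius_add c a (-b)) a) < c" using madd_ball[OF c _ a] z by simp
  show ?thesis unfolding mobius_coadd_def mobius_gyr_def madd_neg_self madd_zero
    using madd_ball[OF c a w] .
qed

lemma convex_end:
  fixes A D :: "'a::real_normed_vector"
  assumes A: "norm A < c" and x: "norm (A + s *\<^sub>R D) < c" and e: "norm (A + p *\<^sub>R D) = c" and p: "p > 0"
  shows "s < p"
proof (rule ccontr)
  assume "\<not> s < p"
  hence sp: "p \<le> s" by simp
  define l where "l = p / s"
  have l: "0 < l" "l \<le> 1" using sp p unfolding l_def by auto
  have "A + p *\<^sub>R D = (1 - l) *\<^sub>R A + l *\<^sub>R (A + s *\<^sub>R D)"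
    using sp p unfolding l_def by (simp add: algebra_simps)
  hence "norm (A + p *\<^sub>R D) \<le> (1 - l) * norm A + l * norm (A + s *\<^sub>R D)"
  proof -
    have "norm ((1 - l) *\<^sub>R A + l *\<^sub>R (A + s *\<^sub>R D)) \<le> norm ((1 - l) *\<^sub>R A) + norm (l *\<^sub>R (A + s *\<^sub>R D))"
      by (rule norm_triangle_ineq)
    also have "\<dots> = (1 - l) * norm A + l * norm (A + s *\<^sub>R D)" using l by simp
    finally show ?thesis using \<open>A + p *\<^sub>R D = _\<close> by simp
  qed
  also have "\<dots> < (1 - l) * c + l * c"
    using l A x by (intro add_le_less_mono mult_left_mono mult_strict_left_mono) auto
  finally show False using e by (simp add: algebra_simps)
qed


lemma main_generic:
  fixes A B :: "'a::real_inner"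
  assumes c: "c > 0" and A: "norm A < c" and B: "norm B < c" and AB: "A \<noteq> B"
  shows "range (P_AB c A B) = {x. norm x < c \<and> (\<exists>s::real. x = A + s *\<^sub>R (B - A))}"
proof -
  define h where "h = mobius_smult c (1/2) A"
  define u where "u = mobius_add c (-h) (mobius_sub c B h)"
  have Pdef: "\<And>t. P_AB c A B t = mobius_coadd c h (mobius_add c h (mobius_smult c t u))"
    unfolding P_AB_def Let_def h_def u_def ..
  have hb: "norm h < c" unfolding h_def by (rule smult_ball[OF c A])
  have nhb: "norm (-h) < c" using hb by simp
  have Bhb: "norm (mobius_sub c B h) < c" unfolding mobius_sub_def by (rule madd_ball[OF c B nhb])
  have ub: "norm u < c" unfolding u_def by (rule madd_ball[OF c nhb Bhb])
  define Sh where "Sh = MS c h"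
  define Th where "Th = MT c h"
  have Th1: "Th \<ge> 1" unfolding Th_def using MT_ge1[OF c hb] .
  have nSh: "(Sh \<bullet> Sh)/c^2 = Th^2 - 1" unfolding Sh_def Th_def using MS_norm[OF c hb] .
  have AS: "A = (1/Th) *\<^sub>R Sh" using half_smult[OF c A] unfolding h_def Sh_def Th_def .
  have P1: "P_AB c A B 1 = B"
    unfolding Pdef smult_one[OF c ub] unfolding u_def left_cancel[OF c hb Bhb] unfolding mobius_sub_def
    by (rule coadd_sub[OF c hb B])
  have chh: "mobius_coadd c h h = A"
  proof -
    have "mobius_coadd c h h = (1/(Th+Th)) *\<^sub>R (Sh + Sh)" unfolding coadd_formula[OF c hb hb] Th_def Sh_def ..
    also have "\<dots> = (1/Th) *\<^sub>R Sh" using Th1 by (simp add: scaleR_2[symmetric] mult_2[symmetric])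
    finally show ?thesis using AS by simp
  qed
  have u0: "u \<noteq> 0"
  proof
    assume "u = 0"
    hence "P_AB c A B 1 = A" unfolding Pdef mobius_smult_def by (simp add: madd_zero chh)
    thus False using P1 AB by simp
  qed
  define th where "th = artanh (norm u / c)"
  have thu: "tanh th = norm u / c" unfolding th_def by (rule tanh_artanh_real) (use c ub in simp)
  have "tanh th > 0" using thu u0 c by simp
  hence th0: "th > 0" by simp
  define e where "e = (c / norm u) *\<^sub>R u"
  have ne: "norm e = c" unfolding e_def using u0 c by simp
  have ee: "e \<bullet> e = c^2" using ne by (simp add: power2_norm_eq_inner[symmetric])
  have smt: "\<And>t. mobius_smult c t u = tanh (t*th) *\<^sub>R e" unfolding smult_form[OF u0] th_def e_def ..
  define ge where "ge = (Sh \<bullet> e)/c^2"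
  have geb: "\<bar>ge\<bar> < Th"
  proof -
    have "(Sh \<bullet> e)^2 \<le> (Sh \<bullet> Sh) * (e \<bullet> e)"
      using Cauchy_Schwarz_ineq[of Sh e] by (simp add: power2_norm_eq_inner)
    hence "ge^2 \<le> (Sh \<bullet> Sh)/c^2" unfolding ge_def ee using c by (simp add: power_divide field_simps power2_eq_square)
    hence "\<bar>ge\<bar>^2 < Th^2" unfolding nSh by simp
    from power_less_imp_less_base[OF this] Th1 show ?thesis by simp
  qed
  have denpos: "\<And>t. \<bar>t\<bar> \<le> 1 \<Longrightarrow> Th + t*ge > 0"
  proof -
    fix t :: real assume "\<bar>t\<bar> \<le> 1"
    hence "\<bar>t*ge\<bar> \<le> \<bar>ge\<bar>" by (simp add: abs_mult mult_left_le_one_le)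
    thus "Th + t*ge > 0" using geb by linarith
  qed
  define W where "W = e + (ge/(1+Th)) *\<^sub>R Sh"
  define Dv where "Dv = W - ge *\<^sub>R A"
  have lineform: "\<And>t. Th + t*ge \<noteq> 0 \<Longrightarrow> (1/(Th+t*ge)) *\<^sub>R (Sh + t *\<^sub>R W) = A + (t/(Th+t*ge)) *\<^sub>R Dv"
  proof -
    fix t assume D: "Th + t*ge \<noteq> 0"
    have co: "1/(Th+t*ge) = 1/Th - (t/(Th+t*ge))*ge*(1/Th)"
    proof -
      define Dn where "Dn = Th+t*ge"
      have Dn: "Dn \<noteq> 0" "Th \<noteq> 0" using D Th1 unfolding Dn_def by auto
      have "1/Th - (t/Dn)*ge*(1/Th) = (Dn - t*ge)/(Dn*Th)" using Dn by (simp add: field_simps)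
      also have "\<dots> = 1/Dn" unfolding Dn_def using Dn unfolding Dn_def by simp
      finally show ?thesis unfolding Dn_def by simp
    qed
    have "(1/(Th+t*ge)) *\<^sub>R (Sh + t *\<^sub>R W) = (1/(Th+t*ge)) *\<^sub>R Sh + (t/(Th+t*ge)) *\<^sub>R W"
      by (simp add: scaleR_add_right)
    also have "\<dots> = (1/Th - (t/(Th+t*ge))*ge*(1/Th)) *\<^sub>R Sh + (t/(Th+t*ge)) *\<^sub>R W" by (subst co) (rule refl)
    also have "\<dots> = A + (t/(Th+t*ge)) *\<^sub>R Dv" unfolding Dv_def AS by (simp add: algebra_simps)
    finally show "(1/(Th+t*ge)) *\<^sub>R (Sh + t *\<^sub>R W) = A + (t/(Th+t*ge)) *\<^sub>R Dv" .
  qed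
  have Pform: "\<And>t. \<bar>t\<bar> < 1 \<Longrightarrow> mobius_coadd c h (mobius_add c h (t *\<^sub>R e)) = (1/(Th+t*ge)) *\<^sub>R (Sh + t *\<^sub>R W)"
  proof -
    fix t :: real assume t: "\<bar>t\<bar> < 1"
    define v where "v = t *\<^sub>R e"
    have nv: "norm v = \<bar>t\<bar> * c" unfolding v_def using ne by simp
    have vb: "norm v < c" unfolding nv using t c by simp
    have qv: "(norm v)^2 / c^2 = t^2" unfolding nv using c by (simp add: power_mult_distrib power2_abs)
    define m where "m = 2/(1-t^2)*t"
    define Tv where "Tv = (1+t^2)/(1-t^2)"
    have MSv: "MS c v = m *\<^sub>R e" unfolding MS_def qv unfolding m_def v_def by simp
    have MTv: "MT c v = Tv" unfolding MT_def qv Tv_def ..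
    have ipv: "(Sh \<bullet> MS c v)/c^2 = m*ge" unfolding MSv ge_def by simp
    have ipv2: "(MS c h \<bullet> MS c v)/(c^2*(1+MT c h)) = m*ge/(1+Th)"
      unfolding divide_divide_eq_left[symmetric] Sh_def[symmetric] ipv Th_def ..
    define y where "y = mobius_add c h v"
    have yb: "norm y < c" unfolding y_def by (rule madd_ball[OF c hb vb])
    have Ty: "MT c y = Th*Tv + m*ge" unfolding y_def boost(1)[OF c hb vb] Sh_def[symmetric]
      unfolding ipv MTv Th_def ..
    have Sy: "MS c y = m *\<^sub>R e + (m*ge/(1+Th) + Tv) *\<^sub>R Sh" unfolding y_def boost(2)[OF c hb vb]
      unfolding ipv2 unfolding MSv MTv Sh_def ..
    have D: "Th + t*ge > 0" using denpos[of t] t by simp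
    have "mobius_coadd c h y = (1/(Th + MT c y)) *\<^sub>R (Sh + MS c y)"
      unfolding coadd_formula[OF c hb yb] Th_def Sh_def ..
    also have "\<dots> = ((1 + m*ge/(1+Th) + Tv)/(Th + (Th*Tv + m*ge))) *\<^sub>R Sh + (m/(Th + (Th*Tv + m*ge))) *\<^sub>R e"
    proof -
      have gen: "\<And>Den k. (1/Den) *\<^sub>R (Sh + (m *\<^sub>R e + k *\<^sub>R Sh)) = ((1 + k)/Den) *\<^sub>R Sh + (m/Den) *\<^sub>R e"
        by (simp add: scaleR_add_right scaleR_add_left add_divide_distrib algebra_simps)
      show ?thesis unfolding Ty Sy gen by (simp add: add.assoc)
    qed
    also have "\<dots> = ((1 + t*ge/(1+Th))/(Th+t*ge)) *\<^sub>R Sh + (t/(Th+t*ge)) *\<^sub>R e"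
      unfolding m_def Tv_def pform_scalar[OF t Th1 D] ..
    also have "\<dots> = (1/(Th+t*ge)) *\<^sub>R (Sh + t *\<^sub>R W)"
    proof -
      have "(1 + t*ge/(1+Th))/(Th+t*ge) = 1/(Th+t*ge) + (t*(ge/(1+Th)))/(Th+t*ge)"
        by (simp add: add_divide_distrib)
      thus ?thesis unfolding W_def by (simp add: algebra_simps)
    qed
    finally show "mobius_coadd c h (mobius_add c h (t *\<^sub>R e)) = (1/(Th+t*ge)) *\<^sub>R (Sh + t *\<^sub>R W)"
      unfolding y_def v_def .
  qed
  have endpt: "\<And>t. t^2 = 1 \<Longrightarrow> norm ((1/(Th+t*ge)) *\<^sub>R (Sh + t *\<^sub>R W)) = c"
  proof -
    fix t :: real assume t2: "t^2 = 1"
    have ta: "\<bar>t\<bar> \<le> 1" using t2 by (simp add: abs_square_eq_1)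
    have D: "Th + t*ge > 0" using denpos[OF ta] .
    have she: "(Sh \<bullet> e)/c^2 = ge" unfolding ge_def ..
    have ee1: "(e \<bullet> e)/c^2 = 1" unfolding ee using c by simp
    have shw: "(Sh \<bullet> W)/c^2 = ge*Th"
    proof -
      have "(Sh \<bullet> W)/c^2 = (Sh \<bullet> e)/c^2 + (ge/(1+Th))*((Sh \<bullet> Sh)/c^2)"
        unfolding W_def by (simp add: inner_add_right add_divide_distrib)
      also have "\<dots> = ge + (ge/(1+Th))*(Th^2-1)" unfolding she nSh ..
      also have "\<dots> = ge*Th" using Th1 by (simp add: field_simps power2_eq_square)
      finally show ?thesis .
    qed
    have ww: "(W \<bullet> W)/c^2 = 1 + ge^2"
    proof -
      have "(W \<bullet> W)/c^2 = (e \<bullet> e)/c^2 + 2*(ge/(1+Th))*((Sh \<bullet> e)/c^2) + (ge/(1+Th))^2*((Sh \<bullet> Sh)/c^2)"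
        unfolding W_def by (simp add: inner_add_right inner_add_left inner_commute add_divide_distrib power2_eq_square algebra_simps)
      also have "\<dots> = 1 + 2*(ge/(1+Th))*ge + (ge/(1+Th))^2*(Th^2-1)" unfolding she nSh ee1 ..
      also have "\<dots> = 1 + ge^2"
      proof -
        define p where "p = 1 + Th"
        have p0: "p \<noteq> 0" using Th1 unfolding p_def by simp
        have Thp: "Th = p - 1" unfolding p_def by simp
        have "1 + 2*(ge/p)*ge + (ge/p)^2*((p-1)^2-1) = 1 + ge^2"
          using p0 by (simp add: field_simps power2_eq_square; simp add: algebra_simps)
        thus ?thesis unfolding p_def[symmetric] unfolding Thp .
      qed
      finally show ?thesis .
    qed
    have "((Sh + t *\<^sub>R W) \<bullet> (Sh + t *\<^sub>R W))/c^2 = (Sh \<bullet> Sh)/c^2 + 2*t*((Sh \<bullet> W)/c^2) + t^2*((W \<bullet> W)/c^2)"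
      by (simp add: inner_add_right inner_add_left inner_commute add_divide_distrib power2_eq_square algebra_simps)
    also have "\<dots> = (Th + t*ge)^2"
    proof -
      have tt: "t*t = 1" using t2 by (simp add: power2_eq_square)
      have "Th^2 - 1 + 2*t*(ge*Th) + t^2*(1+ge^2) = Th^2 + 2*t*(ge*Th) + (t*t)*ge^2"
        unfolding t2 tt by simp
      also have "\<dots> = (Th + t*ge)^2" by (simp add: power2_eq_square algebra_simps)
      finally show ?thesis unfolding nSh shw ww .
    qed
    finally have n2: "(norm (Sh + t *\<^sub>R W))^2 = (c*(Th + t*ge))^2"
      using c by (simp add: power2_norm_eq_inner power_mult_distrib field_simps; simp add: power2_eq_square algebra_simps)
    have "norm (Sh + t *\<^sub>R W) = c*(Th + t*ge)"
      using n2 c D by (simp add: power2_eq_iff_nonneg)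
    thus "norm ((1/(Th+t*ge)) *\<^sub>R (Sh + t *\<^sub>R W)) = c" using D by simp
  qed
  have Pt: "\<And>t. P_AB c A B t = A + (tanh (t*th)/(Th+tanh (t*th)*ge)) *\<^sub>R Dv"
  proof -
    fix t
    have tb: "\<bar>tanh (t*th)\<bar> < 1" using tanh_real_bounds[of "t*th"] by (simp add: abs_less_iff)
    show "P_AB c A B t = A + (tanh (t*th)/(Th+tanh (t*th)*ge)) *\<^sub>R Dv"
      unfolding Pdef smt Pform[OF tb] using denpos[of "tanh (t*th)"] tb by (intro lineform) auto
  qed
  define s1 where "s1 = tanh th/(Th+tanh th*ge)"
  have Bl: "B = A + s1 *\<^sub>R Dv" using Pt[of 1] P1 unfolding s1_def by simp
  have s10: "s1 \<noteq> 0" using Bl AB by auto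
  have BA: "B - A = s1 *\<^sub>R Dv" using Bl by simp
  define sp where "sp = 1/(Th+ge)"
  define sm where "sm = -1/(Th-ge)"
  have sp0: "sp > 0" unfolding sp_def using geb by simp
  have sm0: "sm < 0" unfolding sm_def using geb by simp
  have d1: "Th + 1*ge \<noteq> 0" using denpos[of 1] by simp
  have d2: "Th + (-1)*ge \<noteq> 0" using denpos[of "-1"] by simp
  have esp: "norm (A + sp *\<^sub>R Dv) = c"
  proof -
    have "norm (A + sp *\<^sub>R Dv) = norm ((1/(Th+1*ge)) *\<^sub>R (Sh + 1 *\<^sub>R W))" using lineform[OF d1] unfolding sp_def by simp
    also have "\<dots> = c" by (rule endpt) simp
    finally show ?thesis .
  qed
  have esm: "norm (A + (-sm) *\<^sub>R (-Dv)) = c"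
  proof -
    have "norm (A + (-sm) *\<^sub>R (-Dv)) = norm ((1/(Th+(-1)*ge)) *\<^sub>R (Sh + (-1) *\<^sub>R W))" using lineform[OF d2] unfolding sm_def by simp
    also have "\<dots> = c" by (rule endpt) simp
    finally show ?thesis .
  qed
  show ?thesis
  proof (rule set_eqI, rule iffI)
    fix x assume "x \<in> range (P_AB c A B)"
    then obtain t where xt: "x = P_AB c A B t" by auto
    have "norm x < c" unfolding xt Pdef
      by (rule coadd_ball[OF c hb madd_ball[OF c hb smult_ball[OF c ub]]])
    moreover have "x = A + ((tanh (t*th)/(Th+tanh (t*th)*ge))/s1) *\<^sub>R (B - A)"
      unfolding xt Pt BA using s10 by simp
    ultimately show "x \<in> {x. norm x < c \<and> (\<exists>s::real. x = A + s *\<^sub>R (B - A))}" by blast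
  next
    fix x assume "x \<in> {x. norm x < c \<and> (\<exists>s::real. x = A + s *\<^sub>R (B - A))}"
    then obtain s where xc: "norm x < c" and xs: "x = A + s *\<^sub>R (B - A)" by auto
    define sg where "sg = s * s1"
    have xsg: "x = A + sg *\<^sub>R Dv" unfolding xs BA sg_def by simp
    have up: "sg < sp" by (rule convex_end[OF A _ esp sp0]) (use xc xsg in simp)
    have lo: "-sg < -sm" by (rule convex_end[OF A _ esm]) (use xc xsg sm0 in simp_all)
    define tau where "tau = sg*Th/(1 - sg*ge)"
    have p1: "Th + ge > 0" "Th - ge > 0" using geb by auto
    have k1: "sg*(Th+ge) < 1" using up p1 unfolding sp_def by (simp add: pos_less_divide_eq)
    have "-sg < 1/(Th-ge)" using lo unfolding sm_def by simp
    hence "-sg*(Th-ge) < 1" using p1 by (simp add: pos_less_divide_eq)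
    hence k2: "sg*(Th-ge) > -1" by simp
    have den1: "1 - sg*ge > 0" using k1 k2 by (simp add: algebra_simps)
    have taub: "\<bar>tau\<bar> < 1" unfolding tau_def using den1 k1 k2
      by (simp add: abs_less_iff divide_less_eq less_divide_eq algebra_simps)
    have tauv: "tau/(Th+tau*ge) = sg"
    proof -
      have "Th + tau*ge = Th/(1 - sg*ge)" unfolding tau_def using den1 by (simp add: field_simps)
      thus ?thesis unfolding tau_def using den1 Th1 by simp
    qed
    define t where "t = artanh tau / th"
    have tt: "tanh (t*th) = tau" unfolding t_def using th0 tanh_artanh_real[OF taub] by simp
    have "P_AB c A B t = x" unfolding Pt unfolding tt unfolding tauv xsg ..
    thus "x \<in> range (P_AB c A B)" by (metis rangeI)
  qed
qed


theorem theorem2: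
  fixes c :: real and A B :: "real ^ 'n"
  assumes "c > 0" and "CARD('n) \<ge> 2"
    and "norm A < c" and "norm B < c" and "A \<noteq> B"
  shows "range (P_AB c A B) = {x. norm x < c \<and> (\<exists>s::real. x = A + s *\<^sub>R (B - A))}"
  by (rule main_generic[OF assms(1,3,4,5)])

end
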